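(* Let $r\in\mathbb{Z}$ and let $P_{n,k}(r)=[x^n]\,\frac{1+rx^2}{1+x^2}\left(\frac{x}{1+x^2}\right)^k$ for $n,k\ge 0$. Then for all $n\ge 0$, $$P_{2n,n}(r)=0^n-(r-3)(-1)^{\frac{n}{2}}\binom{\frac{3n}{2}-1}{\frac{n}{2}-1}\frac{1+(-1)^n}{2},$$ and alternatively $$P_{2n,n}(r)=(r-2)\,0^n -(r-3)(-1)^{\frac{n}{2}}\binom{\frac{3n}{2}-1}{n}\frac{1+(-1)^n}{2},$$ where the terms carrying the factor $\frac{1+(-1)^n}{2}$ are interpreted as $0$ when $n$ is odd.
   Context: $[x^n]h(x)$ denotes the coefficient of $x^n$ in $h(x)$. $0^m$ equals $1$ if $m=0$ and $0$ otherwise. For integers $a$ and $k$, $\binom{a}{k}=\frac{a(a-1)\cdots(a-k+1)}{k!}$ if $k\ge 0$ and $\binom{a}{k}=0$ if $k<0$ (so $\binom{-1}{-1}=0$, $\binom{-1}{0}=1$). The $P_{n,k}(r)$ form the coefficient array of the restricted Chebyshev–Boubaker polynomials $P_n(x;r)=\sum_k P_{n,k}(r)x^k$. *)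

theory Defs
  imports "HOL-Computational_Algebra.Formal_Power_Series"
begin

definition P :: "nat \<Rightarrow> nat \<Rightarrow> int \<Rightarrow> rat" where
  "P n k r = fps_nth ((1 + fps_const (of_int r) * fps_X ^ 2) / (1 + fps_X ^ 2)
                        * (fps_X / (1 + fps_X ^ 2)) ^ k) n"

definition gbinom :: "int \<Rightarrow> int \<Rightarrow> rat" where
  "gbinom a k = (if k < 0 then 0 else (of_int a :: rat) gchoose (nat k))"

end

theory Submission
  imports Defs
begin

definition F :: "nat \<Rightarrow> rat fps" where
  "F n = Abs_fps (\<lambda>k. if even k then (-1)^(k div 2) * of_nat ((n + k div 2 - 1) choose (k div 2)) else 0)"

lemma F0: "F 0 = 1"
proof (rule fps_ext)
  fix k show "fps_nth (F 0) k = fps_nth (1::rat fps) k"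
    by (cases "k = 0") (auto simp: F_def elim!: evenE)
qed

lemma mult_X2: "fps_nth (f * (1 + fps_X^2 :: rat fps)) k = fps_nth f k + (if k < 2 then 0 else fps_nth f (k - 2))"
  by (simp add: distrib_left fps_X_power_mult_right_nth)

lemma Frec: "F (Suc n) * (1 + fps_X^2) = F n"
proof (rule fps_ext)
  fix k
  show "fps_nth (F (Suc n) * (1 + fps_X^2)) k = fps_nth (F n) k"
  proof (cases "even k")
    case True
    then obtain j where k: "k = 2*j" by (auto elim!: evenE)
    show ?thesis
    proof (cases j)
      case 0 then show ?thesis using k by (simp add: mult_X2 F_def)
    next
      case (Suc i)
      have "k - 2 = 2*i" using k Suc by simp
      moreover have "(n + j choose j) = (n + i choose i) + (n + j - 1 choose j)"
        using Suc by simp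
      ultimately show ?thesis using k Suc
        unfolding mult_X2 by (simp add: F_def algebra_simps)
    qed
  next
    case False
    then show ?thesis by (simp add: mult_X2 F_def)
  qed
qed

lemma Finv: "F n * (1 + fps_X^2) ^ n = 1"
proof (induction n)
  case 0 then show ?case by (simp add: F0)
next
  case (Suc n)
  have "F (Suc n) * (1 + fps_X^2) ^ Suc n = (F (Suc n) * (1 + fps_X^2)) * (1 + fps_X^2) ^ n"
    by (simp add: algebra_simps)
  then show ?case using Suc Frec by simp
qed

lemma Fis: "inverse ((1 + fps_X^2 :: rat fps) ^ n) = F n"
  by (rule fps_inverse_unique) (metis Finv mult.commute)

lemma Pform: "P (2*n) n r = fps_nth ((1 + fps_const (of_int r) * fps_X ^ 2) * F (Suc n)) n"
proof -
  let ?I = "inverse (1 + fps_X^2 :: rat fps)"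
  have u: "fps_nth (1 + fps_X^2 :: rat fps) 0 \<noteq> 0" by simp
  have "(1 + fps_const (of_int r) * fps_X ^ 2) / (1 + fps_X ^ 2) * (fps_X / (1 + fps_X ^ 2)) ^ n
      = (1 + fps_const (of_int r) * fps_X ^ 2) * ?I * (fps_X * ?I) ^ n"
    using fps_divide_unit[OF u] by simp
  also have "\<dots> = fps_X ^ n * ((1 + fps_const (of_int r) * fps_X ^ 2) * ?I ^ Suc n)"
    by (simp add: power_mult_distrib algebra_simps)
  also have "?I ^ Suc n = F (Suc n)" using Fis[of "Suc n"] fps_inverse_power by metis
  finally show ?thesis unfolding P_def by (simp add: fps_X_power_mult_nth)
qed


lemma coeffmul: "fps_nth ((1 + fps_const c * fps_X ^ 2) * G) k
   = fps_nth G k + c * (if k < 2 then 0 else fps_nth G (k - 2))"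
  by (simp add: distrib_right mult.assoc fps_X_power_mult_nth)

lemma Fnth: "fps_nth (F n) k = (if even k then (-1)^(k div 2) * of_nat ((n + k div 2 - 1) choose (k div 2)) else 0)"
  by (simp add: F_def)

lemma gb_nat: "gbinom (int a) (int b) = of_nat (a choose b)"
  unfolding gbinom_def by (simp add: binomial_gbinomial[symmetric])

lemma binom3: "(3 * Suc i choose Suc i) = 3 * (3 * Suc i - 1 choose i)"
proof -
  have "Suc i * (3 * Suc i choose Suc i) = 3 * Suc i * (3 * Suc i - 1 choose i)"
    using times_binomial_minus1_eq[of "Suc i" "3 * Suc i"] by simp
  then show ?thesis by (metis mult.assoc mult.commute mult_left_cancel nat.distinct(1))
qed

lemma binomsym: "(3 * Suc i - 1 choose (2 * Suc i)) = (3 * Suc i - 1 choose i)"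
proof -
  have "(3 * Suc i - 1 choose (2 * Suc i)) = (3 * Suc i - 1 choose (3 * Suc i - 1 - 2 * Suc i))"
    by (rule binomial_symmetric) simp
  also have "3 * Suc i - 1 - 2 * Suc i = i" by simp
  finally show ?thesis .
qed

theorem mainTheorem3:
  fixes r :: int and n :: nat
  shows "P (2*n) n r = (0::rat)^n - of_int (r - 3) *
            (if even n then (-1)^(n div 2) * gbinom (3 * int (n div 2) - 1) (int (n div 2) - 1) else 0)
       \<and> P (2*n) n r = of_int (r - 2) * (0::rat)^n - of_int (r - 3) *
            (if even n then (-1)^(n div 2) * gbinom (3 * int (n div 2) - 1) (int n) else 0)"
proof (cases "even n")
  case False
  then have "n \<noteq> 0" by (metis even_zero)
  moreover have "P (2*n) n r = 0"
    unfolding Pform coeffmul Fnth using False by (auto simp: odd_pos)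
  ultimately show ?thesis using False by simp
next
  case True
  then obtain m where nm: "n = 2*m" by (auto elim!: evenE)
  show ?thesis
  proof (cases m)
    case 0
    have "P (2*n) n r = 1" unfolding Pform coeffmul Fnth using nm 0 by simp
    then show ?thesis using nm 0 by (simp add: gbinom_def)
  next
    case (Suc i)
    have e1: "3 * int (n div 2) - 1 = int (3 * Suc i - 1)" using nm Suc by simp
    have e2: "int (n div 2) - 1 = int i" using nm Suc by simp
    have e3: "int n = int (2 * Suc i)" using nm Suc by simp
    have b: "(of_nat (3 * Suc i choose Suc i) :: rat) = 3 * of_nat (3 * Suc i - 1 choose i)"
      by (simp only: binom3 of_nat_mult of_nat_numeral)
    have "P (2*n) n r = (-1)^(Suc i) * of_nat (3 * Suc i choose Suc i)
           + of_int r * ((-1)^i * of_nat (3 * Suc i - 1 choose i))"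
      unfolding Pform coeffmul Fnth using nm Suc
      by (simp add: algebra_simps numeral_3_eq_3)
    also have "\<dots> = - of_int (r - 3) * ((-1)^(Suc i) * of_nat (3 * Suc i - 1 choose i))"
      unfolding b by (simp add: algebra_simps)
    finally have "P (2*n) n r = - of_int (r - 3) * ((-1)^(Suc i) * of_nat (3 * Suc i - 1 choose i))" .
    then show ?thesis using nm Suc unfolding e1 e2 e3 gb_nat binomsym by (simp add: algebra_simps)
  qed
qed

end
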